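(* Let $M\subset\mathbb{R}^2$ be closed, $z\in M$ and $u>0$. Suppose there exist sequences $(z_n)$ in $M$ and $(\rho_n)$ in $(0,\infty)$ such that $z_n\to z$ and, for each $n\in\mathbb{N}$: (i) $z_n\in(z+S^u)\setminus\{z\}$, and (ii) either $(z_n+A^{3u}_{\rho_n})\cap M=\{z_n\}$ or $(z_n-A^{3u}_{\rho_n})\cap M=\{z_n\}$. Then $M\notin\mathcal{D}_2$.
   Context: For $r>0$ and $u>0$: $A^u_r=\{(x,y):0\le x\le r,\ |y|\le ux\}$ and $S^u=\{(x,y):x\in\mathbb{R},\ |y|\le u|x|\}$. A function on an open convex set $C\subset\mathbb{R}^d$ is DC if it is the difference of two convex functions on $C$. $\mathcal{D}_2$ denotes the family consisting of $\varnothing$ together with all nonempty closed sets $A\subset\mathbb{R}^2$ whose distance function $d_A=\operatorname{dist}(\cdot,A)$ is DC on $\mathbb{R}^2$. *)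

theory Defs
  imports "HOL-Analysis.Analysis"
begin

definition Aset :: "real \<Rightarrow> real \<Rightarrow> (real \<times> real) set" where
  "Aset u r = {(x, y). 0 \<le> x \<and> x \<le> r \<and> \<bar>y\<bar> \<le> u * x}"

definition Sset :: "real \<Rightarrow> (real \<times> real) set" where
  "Sset u = {(x, y). \<bar>y\<bar> \<le> u * \<bar>x\<bar>}"

definition DC_on :: "'a::real_vector set \<Rightarrow> ('a \<Rightarrow> real) \<Rightarrow> bool" where
  "DC_on C f \<longleftrightarrow> (\<exists>g h. convex_on C g \<and> convex_on C h \<and> (\<forall>x\<in>C. f x = g x - h x))"

definition D2 :: "(real \<times> real) set set" where
  "D2 = {A. A = {} \<or> (A \<noteq> {} \<and> closed A \<and> DC_on UNIV (\<lambda>x. infdist x A))}"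

end

theory Submission
  imports Defs
begin

lemma slope_mono:
  fixes g :: "'a::real_vector \<Rightarrow> real"
  assumes g: "convex_on UNIV g" and s: "0 < s" "s \<le> t"
  shows "(g (x + s *\<^sub>R d) - g x) / s \<le> (g (x + t *\<^sub>R d) - g x) / t"
proof -
  have t: "t > 0" using s by simp
  have eq: "x + s *\<^sub>R d = (1 - s/t) *\<^sub>R x + (s/t) *\<^sub>R (x + t *\<^sub>R d)"
    using t by (simp add: algebra_simps)
  have "g (x + s *\<^sub>R d) \<le> (1 - s/t) * g x + (s/t) * g (x + t *\<^sub>R d)"
    unfolding eq by (rule convex_onD[OF g]) (use s t in auto)
  then have "g (x + s *\<^sub>R d) - g x \<le> (s/t) * (g (x + t *\<^sub>R d) - g x)"
    by (simp add: algebra_simps)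
  then show ?thesis using s t by (simp add: field_simps)
qed

lemma slope_lower:
  fixes g :: "'a::real_vector \<Rightarrow> real"
  assumes g: "convex_on UNIV g" and s: "0 < s"
  shows "g x - g (x - d) \<le> (g (x + s *\<^sub>R d) - g x) / s"
proof -
  have eq: "x = (1 - s/(1+s)) *\<^sub>R (x + s *\<^sub>R d) + (s/(1+s)) *\<^sub>R (x - d)"
  proof -
    have "(1 - s/(1+s)) = 1/(1+s)" using s by (simp add: field_simps)
    then have "(1 - s/(1+s)) *\<^sub>R (x + s *\<^sub>R d) + (s/(1+s)) *\<^sub>R (x - d)
       = (1/(1+s)) *\<^sub>R ((x + s *\<^sub>R d) + s *\<^sub>R (x - d))"
      by (simp add: scaleR_add_right scaleR_add_left divide_inverse)
    also have "(x + s *\<^sub>R d) + s *\<^sub>R (x - d) = (1+s) *\<^sub>R x"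
      by (simp add: algebra_simps)
    finally show ?thesis using s by simp
  qed
  have "g x \<le> (1 - s/(1+s)) * g (x + s *\<^sub>R d) + (s/(1+s)) * g (x - d)"
    by (subst eq, rule convex_onD[OF g]) (use s in auto)
  also have "(1 - s/(1+s)) * g (x + s *\<^sub>R d) + (s/(1+s)) * g (x - d) = (g (x + s *\<^sub>R d) + s * g (x - d)) / (1+s)"
  proof -
    have ne: "1 + s \<noteq> 0" using s by simp
    have "(1 - s/(1+s)) = 1/(1+s)" using ne by (simp add: field_simps)
    then show ?thesis using ne by (simp add: add_divide_distrib)
  qed
  finally have "(1+s) * g x \<le> g (x + s *\<^sub>R d) + s * g (x - d)"
    using s by (simp add: pos_le_divide_eq mult.commute)
  then show ?thesis using s by (simp add: field_simps)
qed

lemma midpoint_conv: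
  fixes h :: "'a::real_vector \<Rightarrow> real"
  assumes h: "convex_on UNIV h"
  shows "2 * h x \<le> h (x + v) + h (x - v)"
proof -
  have eq: "x = (1 - 1/2) *\<^sub>R (x + v) + (1/2::real) *\<^sub>R (x - v)"
    by (simp add: algebra_simps flip: scaleR_add_left)
  have "h x \<le> (1 - 1/2) * h (x + v) + (1/2) * h (x - v)"
    by (subst eq, rule convex_onD[OF h]) auto
  then show ?thesis by simp
qed

lemma geom:
  fixes M :: "(real \<times> real) set" and a b e s m u \<rho> :: real
  assumes u: "u > 0" and e: "e = 1 \<or> e = -1" and s: "0 < s" "s \<le> \<rho>/2"
    and m: "\<bar>m\<bar> \<le> u"
    and emp: "\<And>q. q \<in> M \<Longrightarrow> q \<noteq> (a,b) \<Longrightarrow> (e * (fst q - a), e * (snd q - b)) \<notin> Aset (3*u) \<rho>"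
    and q: "q \<in> M"
  shows "2*u/(1+3*u) * s \<le> dist (a + e * s, b + e * s * m) q"
proof -
  obtain qa qb where qq: "q = (qa, qb)" by (cases q)
  define X where "X = e * (qa - a)"
  define Y where "Y = e * (qb - b)"
  define \<delta> where "\<delta> = dist (a + e * s, b + e * s * m) q"
  have ee: "e * e = 1" using e by auto
  have d1: "\<bar>s - X\<bar> \<le> \<delta>"
  proof -
    have "\<bar>s - X\<bar> = \<bar>(a + e * s) - qa\<bar>" using e unfolding X_def by (auto simp: algebra_simps)
    also have "\<dots> \<le> \<delta>" unfolding \<delta>_def qq using dist_fst_le[of "(a + e * s, b + e * s * m)" "(qa,qb)"]
      by (simp add: dist_real_def)
    finally show ?thesis .
  qed
  have d2: "\<bar>s * m - Y\<bar> \<le> \<delta>"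
  proof -
    have "\<bar>s * m - Y\<bar> = \<bar>(b + e * s * m) - qb\<bar>" using e unfolding Y_def by (auto simp: algebra_simps)
    also have "\<dots> \<le> \<delta>" unfolding \<delta>_def qq using dist_snd_le[of "(a + e * s, b + e * s * m)" "(qa,qb)"]
      by (simp add: dist_real_def)
    finally show ?thesis .
  qed
  have k1: "2*u/(1+3*u) \<le> 1" using u by (simp add: field_simps)
  have k2: "2*u/(1+3*u) * s \<le> s" using mult_right_mono[OF k1, of s] s by simp
  show ?thesis
  proof (cases "q = (a,b)")
    case True
    then have "X = 0" unfolding X_def qq by simp
    then have "s \<le> \<delta>" using d1 s by simp
    then show ?thesis unfolding \<delta>_def using k1 s
      using k2 by linarith
  next
    case False
    then have nA: "(X, Y) \<notin> Aset (3*u) \<rho>" using emp[OF q] unfolding X_def Y_def qq by simp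
    then have "X < 0 \<or> X > \<rho> \<or> \<bar>Y\<bar> > 3*u*X" unfolding Aset_def by auto
    then have "s \<le> \<delta> \<or> 2*u * s < (1+3*u)*\<delta>"
    proof (elim disjE)
      assume "X < 0" then show ?thesis using d1 s by auto
    next
      assume "X > \<rho>" then show ?thesis using d1 s by auto
    next
      assume h: "\<bar>Y\<bar> > 3*u*X"
      have "\<bar>Y\<bar> \<le> u * s + \<delta>"
      proof -
        have "\<bar>s * m\<bar> \<le> u * s" using m s by (simp add: abs_mult mult.commute mult_right_mono)
        then show ?thesis using d2 by linarith
      qed
      moreover have "X \<ge> s - \<delta>" using d1 by linarith
      then have "3*u*X \<ge> 3*u*(s - \<delta>)" using u by (simp add: mult_left_mono)
      ultimately show ?thesis using h by (auto simp: algebra_simps)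
    qed
    then show ?thesis
    proof
      assume "s \<le> \<delta>" then show ?thesis unfolding \<delta>_def using k1 s
        using k2 by linarith
    next
      assume "2*u * s < (1+3*u)*\<delta>"
      then show ?thesis unfolding \<delta>_def using u by (simp add: field_simps)
    qed
  qed
qed



lemma conv_lip1:
  fixes g :: "'a::real_normed_vector \<Rightarrow> real"
  assumes g: "convex_on UNIV g" and R: "R > 0" and B: "\<forall>w\<in>cball z (2*R). \<bar>g w\<bar> \<le> B"
    and x: "x \<in> cball z R" and y: "y \<in> cball z R"
  shows "g y - g x \<le> 2*B/R * dist x y"
proof (cases "x = y")
  case True
  then show ?thesis by simp
next
  case False
  define r where "r = norm (y - x)"
  have r: "r > 0" using False unfolding r_def by simp
  have rd: "r = dist x y" unfolding r_def by (simp add: dist_norm norm_minus_commute)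
  define w where "w = y + (R/r) *\<^sub>R (y - x)"
  define l where "l = r/(r+R)"
  have l01: "0 \<le> l" "l \<le> 1" using r R unfolding l_def by auto
  have nw: "norm (w - y) = R" unfolding w_def r_def using R False by simp
  have "dist z w \<le> dist z y + dist y w" by (rule dist_triangle)
  also have "dist y w = R" using nw by (simp add: dist_norm norm_minus_commute)
  finally have wz: "w \<in> cball z (2*R)" using y by simp
  have c1: "1 - l = R/(r+R)" unfolding l_def using r R by (simp add: field_simps)
  have c2: "l * (R/r) = R/(r+R)" unfolding l_def using r R by (simp add: divide_simps)
  have "(1 - l) *\<^sub>R x + l *\<^sub>R w = (R/(r+R)) *\<^sub>R x + l *\<^sub>R y + (l * (R/r)) *\<^sub>R (y - x)"
    unfolding w_def c1 by (simp add: algebra_simps)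
  also have "\<dots> = (l + R/(r+R)) *\<^sub>R y" unfolding c2 by (simp add: algebra_simps)
  also have "l + R/(r+R) = 1" unfolding l_def using r R by (simp add: add_divide_distrib[symmetric])
  finally have yeq: "y = (1 - l) *\<^sub>R x + l *\<^sub>R w" by simp
  have "g y \<le> (1 - l) * g x + l * g w"
    by (subst yeq, rule convex_onD[OF g]) (use l01 in auto)
  then have "g y - g x \<le> l * (g w - g x)" by (simp add: algebra_simps)
  also have "\<dots> \<le> l * (2*B)"
  proof (rule mult_left_mono)
    have "x \<in> cball z (2*R)" using x R by auto
    then have "\<bar>g x\<bar> \<le> B" "\<bar>g w\<bar> \<le> B" using B wz by auto
    then show "g w - g x \<le> 2*B" by linarith
  qed (use l01 in auto)
  also have "\<dots> \<le> r / R * (2*B)"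
  proof (rule mult_right_mono)
    show "l \<le> r/R" unfolding l_def using r R by (simp add: frac_le)
    show "0 \<le> 2*B" using B x R by (smt (verit) centre_in_cball)
  qed
  finally show ?thesis unfolding rd by (simp add: algebra_simps)
qed



lemma dist_scale_shift:
  fixes a b z :: "'a::real_normed_vector"
  assumes "c \<ge> 0"
  shows "dist (z + c *\<^sub>R a) (z + c *\<^sub>R b) = c * dist a b"
proof -
  have "dist (z + c *\<^sub>R a) (z + c *\<^sub>R b) = norm (c *\<^sub>R (a - b))"
    by (simp add: dist_norm algebra_simps)
  then show ?thesis using assms by (simp add: dist_norm)
qed

lemma core:
  fixes g :: "'a::euclidean_space \<Rightarrow> real"
  assumes g: "convex_on UNIV g" and t: "\<And>n. t n > 0" and t0: "t \<longlonglongrightarrow> 0"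
    and dd: "dd \<longlonglongrightarrow> d0" and k: "\<kappa> > 0"
  shows "\<exists>n. g (z + (2 * t n) *\<^sub>R dd n) + g z - 2 * g (z + t n *\<^sub>R dd n) < \<kappa> * t n"
proof -
  define q where "q s = (g (z + s *\<^sub>R d0) - g z) / s" for s
  define S where "S = q ` {0<..}"
  have Sne: "S \<noteq> {}" unfolding S_def by auto
  have bdd: "bdd_below S" unfolding S_def bdd_below_def
    using slope_lower[OF g, of _ z d0] unfolding q_def by auto
  define lo where "lo = Inf S"
  define \<epsilon> where "\<epsilon> = \<kappa> / 4"
  have ep: "\<epsilon> > 0" using k unfolding \<epsilon>_def by simp
  obtain s0 where s0: "s0 > 0" "q s0 < lo + \<epsilon>"
    using cInf_lessD[OF Sne, of "lo + \<epsilon>"] ep unfolding lo_def S_def by auto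
  have small: "g (z + (2* s) *\<^sub>R d0) + g z - 2 * g (z + s *\<^sub>R d0) \<le> 2 * s * \<epsilon>"
    if s: "0 < s" "s \<le> s0/2" for s
  proof -
    have "q (2* s) \<le> q s0" unfolding q_def by (rule slope_mono[OF g]) (use s in auto)
    moreover have "lo \<le> q s" unfolding lo_def S_def using s bdd unfolding S_def
      by (intro cInf_lower) auto
    ultimately have "q (2* s) - q s \<le> \<epsilon>" using s0 by linarith
    then have "2* s * (q (2* s) - q s) \<le> 2* s*\<epsilon>" using s by (simp add: mult_left_mono)
    moreover have "2* s * (q (2* s) - q s) = g (z + (2* s) *\<^sub>R d0) + g z - 2 * g (z + s *\<^sub>R d0)"
      unfolding q_def using s by (simp add: field_simps)
    ultimately show ?thesis by simp
  qed
  define R where "R = norm d0 + 1"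
  have R: "R > 0" unfolding R_def by (simp add: add_nonneg_pos)
  have cont: "continuous_on (cball z (2*R)) g"
    using convex_on_continuous[OF open_UNIV g] continuous_on_subset by blast
  have "bounded (g ` cball z (2*R))"
    by (rule compact_imp_bounded, rule compact_continuous_image[OF cont compact_cball])
  then obtain B where B: "\<forall>w\<in>cball z (2*R). \<bar>g w\<bar> \<le> B"
    unfolding bounded_real by auto
  have B0: "B \<ge> 0" using B R by (smt (verit) centre_in_cball)
  define L where "L = 2*B/R"
  have L0: "L \<ge> 0" unfolding L_def using B0 R by simp
  have lip: "\<bar>g y - g x\<bar> \<le> L * dist x y" if "x \<in> cball z R" "y \<in> cball z R" for x y
    using conv_lip1[OF g R B that] conv_lip1[OF g R B that(2,1)] unfolding L_def
    by (simp add: dist_commute abs_le_iff)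
  define \<eta> where "\<eta> = min 1 (\<epsilon> / (4*L+1))"
  have eta: "\<eta> > 0" unfolding \<eta>_def using ep L0 by simp
  have ev1: "\<forall>\<^sub>F n in sequentially. t n < min (1/2) (s0/2)"
    using t0 s0(1) by (intro order_tendstoD) auto
  have ev2: "\<forall>\<^sub>F n in sequentially. dist (dd n) d0 < \<eta>"
    using dd eta by (rule tendstoD)
  obtain n where n1: "t n < min (1/2) (s0/2)" and n2: "dist (dd n) d0 < \<eta>"
    using eventually_happens'[OF _ eventually_conj[OF ev1 ev2]] by auto
  define T where "T = t n"
  have T: "T > 0" "T \<le> 1/2" "T \<le> s0/2" using t[of n] n1 unfolding T_def by auto
  have ndd: "norm (dd n) \<le> norm d0 + 1"
    using n2 unfolding \<eta>_def dist_norm by (smt (verit) norm_triangle_ineq2)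
  have inball: "z + c *\<^sub>R v \<in> cball z R" if "0 \<le> c" "c \<le> 1" "norm v \<le> norm d0 + 1" for c v
  proof -
    have "norm (c *\<^sub>R v) \<le> 1 * (norm d0 + 1)"
      using that mult_mono[of c 1 "norm v" "norm d0 + 1"] by simp
    then show ?thesis unfolding R_def by (simp add: dist_norm)
  qed
  have D: "dist (dd n) d0 * (4*L) \<le> \<epsilon>"
  proof -
    have "dist (dd n) d0 * (4*L) \<le> dist (dd n) d0 * (4*L+1)" by (simp add: mult_left_mono)
    also have "\<dots> \<le> \<epsilon>" using n2 unfolding \<eta>_def using L0
      by (simp add: pos_less_divide_eq less_imp_le)
    finally show ?thesis .
  qed
  have a1: "g (z + (2*T) *\<^sub>R dd n) \<le> g (z + (2*T) *\<^sub>R d0) + L * (2*T * dist (dd n) d0)"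
    using lip[OF inball[of "2*T" d0] inball[of "2*T" "dd n"]] T ndd
    dist_scale_shift[of "2*T" z d0 "dd n"] by (simp add: dist_commute)
  have a2: "g (z + T *\<^sub>R d0) \<le> g (z + T *\<^sub>R dd n) + L * (T * dist (dd n) d0)"
    using lip[OF inball[of T "dd n"] inball[of T d0]] T ndd
    dist_scale_shift[of T z "dd n" d0] by (simp add: dist_commute)
  have "g (z + (2*T) *\<^sub>R dd n) + g z - 2 * g (z + T *\<^sub>R dd n)
     \<le> (g (z + (2*T) *\<^sub>R d0) + g z - 2 * g (z + T *\<^sub>R d0)) + T * (dist (dd n) d0 * (4*L))"
    using a1 a2 by (simp add: algebra_simps)
  also have "\<dots> \<le> 2 * T * \<epsilon> + T * \<epsilon>"
    using small[of T] T D by (intro add_mono) (auto simp: mult_left_mono)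
  also have "\<dots> < \<kappa> * T" using T k unfolding \<epsilon>_def by simp
  finally show ?thesis unfolding T_def by blast
qed



lemma infdist_geq:
  assumes "M \<noteq> {}" "\<And>q. q \<in> M \<Longrightarrow> c \<le> dist P q"
  shows "c \<le> infdist P M"
  unfolding infdist_notempty[OF assms(1)] by (rule cINF_greatest) (use assms in auto)

lemma lower_one:
  fixes M :: "(real \<times> real) set" and x0 D :: "real \<times> real"
  assumes u: "u > 0" and Mne: "M \<noteq> {}" and s: "0 < s" "s \<le> \<rho>/2"
    and D: "fst D = 1 \<or> fst D = -1" "\<bar>snd D\<bar> \<le> u"
    and cone: "((\<lambda>p. x0 + p) ` Aset (3 * u) \<rho>) \<inter> M = {x0}
            \<or> ((\<lambda>p. x0 - p) ` Aset (3 * u) \<rho>) \<inter> M = {x0}"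
  shows "2*u/(1+3*u) * s \<le> infdist (x0 + s *\<^sub>R D) M \<or> 2*u/(1+3*u) * s \<le> infdist (x0 - s *\<^sub>R D) M"
proof -
  obtain a b where x0: "x0 = (a,b)" by (cases x0)
  obtain \<sigma> mm where Dd: "D = (\<sigma>, mm)" by (cases D)
  have sig: "\<sigma> = 1 \<or> \<sigma> = -1" and mm: "\<bar>mm\<bar> \<le> u" using D Dd by auto
  obtain e where e: "e = 1 \<or> e = -1" and
    emp: "\<And>q. q \<in> M \<Longrightarrow> q \<noteq> (a,b) \<Longrightarrow> (e * (fst q - a), e * (snd q - b)) \<notin> Aset (3*u) \<rho>"
  proof -
    show ?thesis using cone
    proof
      assume c: "((\<lambda>p. x0 + p) ` Aset (3 * u) \<rho>) \<inter> M = {x0}"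
      show ?thesis
      proof (rule that[of 1])
        fix q assume q: "q \<in> M" "q \<noteq> (a,b)"
        show "(1 * (fst q - a), 1 * (snd q - b)) \<notin> Aset (3*u) \<rho>"
        proof
          assume "(1 * (fst q - a), 1 * (snd q - b)) \<in> Aset (3*u) \<rho>"
          then have i: "x0 + (1 * (fst q - a), 1 * (snd q - b)) \<in> ((\<lambda>p. x0 + p) ` Aset (3 * u) \<rho>)" by (rule imageI)
          have "x0 + (1 * (fst q - a), 1 * (snd q - b)) = q" unfolding x0 by (simp add: prod_eq_iff)
          then have "q \<in> ((\<lambda>p. x0 + p) ` Aset (3 * u) \<rho>) \<inter> M" using i q(1) by simp
          then have "q \<in> {x0}" using c by simp
          then show False using q x0 by simp
        qed
      qed simp
    next
      assume c: "((\<lambda>p. x0 - p) ` Aset (3 * u) \<rho>) \<inter> M = {x0}"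
      show ?thesis
      proof (rule that[of "-1"])
        fix q assume q: "q \<in> M" "q \<noteq> (a,b)"
        show "(-1 * (fst q - a), -1 * (snd q - b)) \<notin> Aset (3*u) \<rho>"
        proof
          assume "(-1 * (fst q - a), -1 * (snd q - b)) \<in> Aset (3*u) \<rho>"
          then have i: "x0 - (-1 * (fst q - a), -1 * (snd q - b)) \<in> ((\<lambda>p. x0 - p) ` Aset (3 * u) \<rho>)" by (rule imageI)
          have "x0 - (-1 * (fst q - a), -1 * (snd q - b)) = q" unfolding x0 by (simp add: prod_eq_iff)
          then have "q \<in> ((\<lambda>p. x0 - p) ` Aset (3 * u) \<rho>) \<inter> M" using i q(1) by simp
          then have "q \<in> {x0}" using c by simp
          then show False using q x0 by simp
        qed
      qed simp
    qed
  qed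
  define k where "k = 2*u/(1+3*u)"
  have G: "k * s \<le> infdist (a + e * s, b + e * s * m') M" if "\<bar>m'\<bar> \<le> u" for m'
    unfolding k_def
    by (rule infdist_geq[OF Mne], rule geom[OF u e s that emp]) auto
  have "e = \<sigma> \<or> e = -\<sigma>" using e sig by auto
  then show ?thesis
  proof
    assume "e = \<sigma>"
    then have "x0 + s *\<^sub>R D = (a + e * s, b + e * s * (\<sigma> * mm))" using sig unfolding x0 Dd by auto
    moreover have "\<bar>\<sigma> * mm\<bar> \<le> u" using sig mm by auto
    ultimately show ?thesis using G unfolding k_def by metis
  next
    assume "e = -\<sigma>"
    then have "x0 - s *\<^sub>R D = (a + e * s, b + e * s * (\<sigma> * mm))" using sig unfolding x0 Dd by auto
    moreover have "\<bar>\<sigma> * mm\<bar> \<le> u" using sig mm by auto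
    ultimately show ?thesis using G unfolding k_def by metis
  qed
qed



theorem lemma4p3:
  fixes M :: "(real \<times> real) set" and z :: "real \<times> real" and u :: real
    and zs :: "nat \<Rightarrow> real \<times> real" and \<rho> :: "nat \<Rightarrow> real"
  assumes "closed M" and "z \<in> M" and "u > 0"
    and "\<And>n. zs n \<in> M" and "\<And>n. \<rho> n > 0"
    and "zs \<longlonglongrightarrow> z"
    and "\<And>n. zs n \<in> ((\<lambda>p. z + p) ` Sset u) - {z}"
    and "\<And>n. ((\<lambda>p. zs n + p) ` Aset (3 * u) (\<rho> n)) \<inter> M = {zs n}
            \<or> ((\<lambda>p. zs n - p) ` Aset (3 * u) (\<rho> n)) \<inter> M = {zs n}"
  shows "M \<notin> D2"
proof
  assume "M \<in> D2"
  moreover have Mne: "M \<noteq> {}" using assms(2) by auto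
  ultimately have "DC_on UNIV (\<lambda>x. infdist x M)" unfolding D2_def by auto
  then obtain g h where g: "convex_on UNIV g" and h: "convex_on UNIV h"
    and fgh: "\<And>x. infdist x M = g x - h x" unfolding DC_on_def by auto
  define xn where "xn n = fst (zs n - z)" for n
  define yn where "yn n = snd (zs n - z)" for n
  define t where "t n = \<bar>xn n\<bar>" for n
  define dd where "dd n = (1 / t n) *\<^sub>R (zs n - z)" for n
  have S: "zs n - z \<in> Sset u" "zs n \<noteq> z" for n
  proof -
    obtain p where "p \<in> Sset u" "zs n = z + p" "zs n \<noteq> z" using assms(7)[of n] by auto
    then show "zs n - z \<in> Sset u" "zs n \<noteq> z" by auto
  qed
  have yx: "\<bar>yn n\<bar> \<le> u * \<bar>xn n\<bar>" for n
    using S(1)[of n] unfolding Sset_def xn_def yn_def by (auto simp: case_prod_beta)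
  have xn0: "xn n \<noteq> 0" for n
  proof
    assume "xn n = 0"
    then have "yn n = 0" using yx[of n] by simp
    then have "zs n - z = 0" using \<open>xn n = 0\<close> unfolding xn_def yn_def by (simp add: prod_eq_iff)
    then show False using S(2)[of n] by simp
  qed
  have tpos: "t n > 0" for n using xn0 unfolding t_def by simp
  have ddc: "dd n = (xn n / t n, yn n / t n)" for n
    unfolding dd_def xn_def yn_def by (simp add: prod_eq_iff divide_inverse mult.commute)
  have fstd: "fst (dd n) = 1 \<or> fst (dd n) = -1" for n
    unfolding ddc t_def using xn0[of n] by (cases "xn n > 0") auto
  have sndd: "\<bar>snd (dd n)\<bar> \<le> u" for n
    unfolding ddc using yx[of n] tpos[of n] unfolding t_def by (simp add: abs_div pos_divide_le_eq)
  have ddK: "dd n \<in> {-1..1} \<times> {-u..u}" for n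
    using fstd[of n] sndd[of n] by (cases "dd n") auto
  have "seq_compact ({-1..1::real} \<times> {-u..u::real})"
    by (rule compact_imp_seq_compact, rule compact_Times) (rule compact_Icc)+
  then obtain d0 r where r: "strict_mono r" and dconv: "(dd \<circ> r) \<longlonglongrightarrow> d0"
    using seq_compactE ddK by metis
  have "(\<lambda>n. zs n - z) \<longlonglongrightarrow> z - z" by (rule tendsto_diff[OF assms(6) tendsto_const])
  then have "t \<longlonglongrightarrow> \<bar>fst (z - z)\<bar>" unfolding t_def xn_def by (rule tendsto_rabs[OF tendsto_fst])
  then have t0: "t \<longlonglongrightarrow> 0" by simp
  have tr0: "(t \<circ> r) \<longlonglongrightarrow> 0" by (rule LIMSEQ_subseq_LIMSEQ[OF t0 r])
  define \<kappa> where "\<kappa> = 2*u/(1+3*u)"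
  have kpos: "\<kappa> > 0" unfolding \<kappa>_def using assms(3) by simp
  obtain n where n: "g (z + (2 * (t \<circ> r) n) *\<^sub>R (dd \<circ> r) n) + g z - 2 * g (z + (t \<circ> r) n *\<^sub>R (dd \<circ> r) n)
      < \<kappa> * (t \<circ> r) n"
    using core[OF g _ tr0 dconv kpos, of z] tpos by auto
  define m where "m = r n"
  define T where "T = t m"
  define D where "D = dd m"
  define x0 where "x0 = zs m"
  have T: "T > 0" unfolding T_def by (rule tpos)
  have TD: "T *\<^sub>R D = zs m - z" unfolding T_def D_def dd_def using T T_def by simp
  have E: "g (x0 + T *\<^sub>R D) + g (x0 - T *\<^sub>R D) - 2 * g x0 < \<kappa> * T"
  proof -
    have two: "(2*T) *\<^sub>R D = T *\<^sub>R D + T *\<^sub>R D" by (metis mult_2 scaleR_add_left)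
    have e1: "z + (2 * T) *\<^sub>R D = x0 + T *\<^sub>R D" unfolding x0_def two TD by simp
    have e2: "z + T *\<^sub>R D = x0" unfolding x0_def using TD by simp
    have e3: "x0 - T *\<^sub>R D = z" unfolding x0_def using TD by simp
    have "g (x0 + T *\<^sub>R D) + g (x0 - T *\<^sub>R D) - 2 * g x0 = g (z + (2 * T) *\<^sub>R D) + g z - 2 * g (z + T *\<^sub>R D)"
      by (simp only: e1 e2 e3)
    then show ?thesis using n unfolding m_def T_def D_def by simp
  qed
  define s where "s = min T (\<rho> m / 2)"
  have s: "0 < s" "s \<le> T" "s \<le> \<rho> m / 2" unfolding s_def using T assms(5)[of m] by auto
  have f0: "g x0 = h x0" using fgh[of x0] assms(4)[of m] unfolding x0_def by simp
  have hmid: "2 * h x0 \<le> h (x0 + s *\<^sub>R D) + h (x0 - s *\<^sub>R D)" by (rule midpoint_conv[OF h])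
  have lo: "\<kappa> * s \<le> infdist (x0 + s *\<^sub>R D) M + infdist (x0 - s *\<^sub>R D) M"
    using lower_one[OF assms(3) Mne s(1) s(3) fstd[of m] sndd[of m] assms(8)[of m]]
      infdist_nonneg[of "x0 + s *\<^sub>R D" M] infdist_nonneg[of "x0 - s *\<^sub>R D" M]
    unfolding \<kappa>_def D_def x0_def by linarith
  have Gs: "\<kappa> * s \<le> g (x0 + s *\<^sub>R D) + g (x0 - s *\<^sub>R D) - 2 * g x0"
    using lo hmid f0 fgh[of "x0 + s *\<^sub>R D"] fgh[of "x0 - s *\<^sub>R D"] by linarith
  have m1: "(g (x0 + s *\<^sub>R D) - g x0) / s \<le> (g (x0 + T *\<^sub>R D) - g x0) / T"
    by (rule slope_mono[OF g s(1) s(2)])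
  have m2: "(g (x0 + s *\<^sub>R (-D)) - g x0) / s \<le> (g (x0 + T *\<^sub>R (-D)) - g x0) / T"
    by (rule slope_mono[OF g s(1) s(2)])
  have "\<kappa> \<le> (g (x0 + s *\<^sub>R D) + g (x0 - s *\<^sub>R D) - 2 * g x0) / s"
    using Gs s(1) by (simp add: pos_le_divide_eq)
  also have "\<dots> = (g (x0 + s *\<^sub>R D) - g x0) / s + (g (x0 + s *\<^sub>R (-D)) - g x0) / s"
    by (simp add: diff_divide_distrib add_divide_distrib[symmetric])
  also have "\<dots> \<le> (g (x0 + T *\<^sub>R D) - g x0) / T + (g (x0 + T *\<^sub>R (-D)) - g x0) / T"
    using m1 m2 by linarith
  also have "\<dots> = (g (x0 + T *\<^sub>R D) + g (x0 - T *\<^sub>R D) - 2 * g x0) / T"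
    by (simp add: diff_divide_distrib add_divide_distrib[symmetric])
  finally have "\<kappa> * T \<le> g (x0 + T *\<^sub>R D) + g (x0 - T *\<^sub>R D) - 2 * g x0"
    using T by (simp add: pos_le_divide_eq)
  then show False using E by linarith
qed

end
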